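(* For monotone graph classes $\mathcal G_1$ and $\mathcal G_2$, the following are equivalent: (1) $\mathcal G_1\boxtimes\mathcal G_2$ has bounded pathwidth; (2) $\mathcal G_1\square\mathcal G_2$ has bounded pathwidth; (3) both $\mathcal G_1$ and $\mathcal G_2$ have bounded pathwidth, and $\tilde{\mathsf v}(\mathcal G_1)$ or $\tilde{\mathsf v}(\mathcal G_2)$ is bounded.
   Context: A graph class is a set of graphs closed under isomorphism containing a graph with non-empty vertex set; it is monotone if closed under taking subgraphs. For a graph parameter $\beta$ and class $\mathcal G$, $\beta(\mathcal G):=\sup\{\beta(G):G\in\mathcal G\}$, and $\beta(\mathcal G)$ is bounded if this supremum is finite. $\tilde{\mathsf v}(G)$ is the maximum number of vertices of a connected component of $G$. For a product $\bullet$, $\mathcal G_1\bullet\mathcal G_2:=\{G_1\bullet G_2: G_1\in\mathcal G_1, G_2\in\mathcal G_2\}$. The cartesian product $G_1 \square G_2$ has vertex set $V(G_1)\times V(G_2)$, with $(a,v)(b,u)$ an edge iff either $ab\in E(G_1)$ and $u=v$, or $uv\in E(G_2)$ and $a=b$; the strong product $G_1\boxtimes G_2$ has the same vertex set, with distinct vertices $(a,v),(b,u)$ adjacent iff ($a=b$ or $ab\in E(G_1)$) and ($u=v$ or $uv\in E(G_2)$). *)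

theory Defs
  imports Main
begin

record 'a graph =
  verts :: "'a set"
  edges :: "'a set set"

definition wf_graph :: "('a, 'b) graph_scheme \<Rightarrow> bool" where
  "wf_graph G \<longleftrightarrow> finite (verts G) \<and>
     (\<forall>e\<in>edges G. e \<subseteq> verts G \<and> card e = 2)"

definition subgraph :: "'a graph \<Rightarrow> 'a graph \<Rightarrow> bool" where
  "subgraph H G \<longleftrightarrow> wf_graph H \<and> verts H \<subseteq> verts G \<and> edges H \<subseteq> edges G"

definition graph_iso :: "'a graph \<Rightarrow> 'b graph \<Rightarrow> bool" where
  "graph_iso G H \<longleftrightarrow> (\<exists>f. bij_betw f (verts G) (verts H) \<and>
     (\<forall>x\<in>verts G. \<forall>y\<in>verts G. ({x, y} \<in> edges G \<longleftrightarrow> {f x, f y} \<in> edges H)))"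

text \<open>Graph classes: vertices are drawn from the countably infinite type nat, so
  "closed under isomorphism" is meaningful (every finite graph has copies here).\<close>
definition graph_class :: "nat graph set \<Rightarrow> bool" where
  "graph_class C \<longleftrightarrow> (\<forall>G\<in>C. wf_graph G) \<and>
     (\<forall>G\<in>C. \<forall>H. wf_graph H \<and> graph_iso G H \<longrightarrow> H \<in> C) \<and>
     (\<exists>G\<in>C. verts G \<noteq> {})"

definition monotone_class :: "nat graph set \<Rightarrow> bool" where
  "monotone_class C \<longleftrightarrow> graph_class C \<and> (\<forall>G\<in>C. \<forall>H. subgraph H G \<longrightarrow> H \<in> C)"

definition path_decomp :: "'a graph \<Rightarrow> 'a set list \<Rightarrow> bool" where
  "path_decomp G bs \<longleftrightarrow> bs \<noteq> [] \<and>
     (\<forall>B\<in>set bs. B \<subseteq> verts G) \<and>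
     (\<forall>v\<in>verts G. \<exists>B\<in>set bs. v \<in> B) \<and>
     (\<forall>e\<in>edges G. \<exists>B\<in>set bs. e \<subseteq> B) \<and>
     (\<forall>v i j k. i \<le> j \<and> j \<le> k \<and> k < length bs \<and> v \<in> bs ! i \<and> v \<in> bs ! k \<longrightarrow> v \<in> bs ! j)"

definition decomp_width :: "'a set list \<Rightarrow> nat" where
  "decomp_width bs = Max ((\<lambda>B. card B - 1) ` set bs)"

definition pathwidth :: "'a graph \<Rightarrow> nat" where
  "pathwidth G = (LEAST k. \<exists>bs. path_decomp G bs \<and> decomp_width bs = k)"

definition bounded_pathwidth :: "'a graph set \<Rightarrow> bool" where
  "bounded_pathwidth C \<longleftrightarrow> (\<exists>k. \<forall>G\<in>C. pathwidth G \<le> k)"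

definition adj :: "'a graph \<Rightarrow> 'a \<Rightarrow> 'a \<Rightarrow> bool" where
  "adj G x y \<longleftrightarrow> {x, y} \<in> edges G"

definition component :: "'a graph \<Rightarrow> 'a \<Rightarrow> 'a set" where
  "component G v = {u \<in> verts G. (adj G)\<^sup>*\<^sup>* v u}"

definition max_comp_size :: "'a graph \<Rightarrow> nat" where
  "max_comp_size G = Max (insert 0 ((\<lambda>v. card (component G v)) ` verts G))"

definition bounded_comp_size :: "'a graph set \<Rightarrow> bool" where
  "bounded_comp_size C \<longleftrightarrow> (\<exists>k. \<forall>G\<in>C. max_comp_size G \<le> k)"

definition cartesian_prod :: "'a graph \<Rightarrow> 'b graph \<Rightarrow> ('a \<times> 'b) graph" where
  "cartesian_prod G1 G2 = \<lparr> verts = verts G1 \<times> verts G2,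
     edges = {{(a, v), (b, u)} | a b u v. a \<in> verts G1 \<and> b \<in> verts G1 \<and>
                 u \<in> verts G2 \<and> v \<in> verts G2 \<and>
                 (({a, b} \<in> edges G1 \<and> u = v) \<or> ({u, v} \<in> edges G2 \<and> a = b))} \<rparr>"

definition strong_prod :: "'a graph \<Rightarrow> 'b graph \<Rightarrow> ('a \<times> 'b) graph" where
  "strong_prod G1 G2 = \<lparr> verts = verts G1 \<times> verts G2,
     edges = {{(a, v), (b, u)} | a b u v. a \<in> verts G1 \<and> b \<in> verts G1 \<and>
                 u \<in> verts G2 \<and> v \<in> verts G2 \<and> (a, v) \<noteq> (b, u) \<and>
                 (a = b \<or> {a, b} \<in> edges G1) \<and> (u = v \<or> {u, v} \<in> edges G2)} \<rparr>"

definition class_prod ::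
  "('a graph \<Rightarrow> 'b graph \<Rightarrow> 'c graph) \<Rightarrow> 'a graph set \<Rightarrow> 'b graph set \<Rightarrow> 'c graph set" where
  "class_prod p C1 C2 = {p G1 G2 | G1 G2. G1 \<in> C1 \<and> G2 \<in> C2}"

end

theory Submission
  imports Defs
begin


definition okg :: "'a graph \<Rightarrow> bool" where
  "okg G \<longleftrightarrow> finite (verts G) \<and> (\<forall>e\<in>edges G. e \<subseteq> verts G)"

lemma wf_okg: "wf_graph G \<Longrightarrow> okg G"
  unfolding wf_graph_def okg_def by auto

lemma okg_cart: "okg G1 \<Longrightarrow> okg G2 \<Longrightarrow> okg (cartesian_prod G1 G2)"
  unfolding okg_def cartesian_prod_def by auto

lemma okg_strong: "okg G1 \<Longrightarrow> okg G2 \<Longrightarrow> okg (strong_prod G1 G2)"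
  unfolding okg_def strong_prod_def by auto

lemma pd_exists: "okg H \<Longrightarrow> path_decomp H [verts H]"
  unfolding path_decomp_def okg_def by auto

lemma pw_attained: "okg H \<Longrightarrow> \<exists>bs. path_decomp H bs \<and> decomp_width bs = pathwidth H"
  unfolding pathwidth_def by (rule LeastI_ex) (blast intro: pd_exists)

lemma pw_le: "path_decomp H bs \<Longrightarrow> pathwidth H \<le> decomp_width bs"
  unfolding pathwidth_def by (rule Least_le) blast

lemma pd_ne: "path_decomp H bs \<Longrightarrow> bs \<noteq> []"
  unfolding path_decomp_def by simp
lemma pd_sub: "path_decomp H bs \<Longrightarrow> B \<in> set bs \<Longrightarrow> B \<subseteq> verts H"
  unfolding path_decomp_def by simp
lemma pd_cov: "path_decomp H bs \<Longrightarrow> v \<in> verts H \<Longrightarrow> \<exists>B\<in>set bs. v \<in> B"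
  unfolding path_decomp_def by simp
lemma pd_edge: "path_decomp H bs \<Longrightarrow> e \<in> edges H \<Longrightarrow> \<exists>B\<in>set bs. e \<subseteq> B"
  unfolding path_decomp_def by simp
lemma pd_int: "path_decomp H bs \<Longrightarrow> i \<le> j \<Longrightarrow> j \<le> k \<Longrightarrow> k < length bs \<Longrightarrow> v \<in> bs ! i \<Longrightarrow> v \<in> bs ! k \<Longrightarrow> v \<in> bs ! j"
  unfolding path_decomp_def by blast

lemma pw_embed:
  assumes G: "\<forall>e\<in>edges G. e \<subseteq> verts G"
  and H: "okg H"
  and inj: "inj_on f (verts G)" and fv: "f ` verts G \<subseteq> verts H"
  and fe: "\<forall>e\<in>edges G. \<exists>e'\<in>edges H. f ` e \<subseteq> e'"
  shows "pathwidth G \<le> pathwidth H"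
proof -
  obtain bs where bs: "path_decomp H bs" "decomp_width bs = pathwidth H"
    using pw_attained[OF H] by blast
  define bs' where "bs' = map (\<lambda>B. {x\<in>verts G. f x \<in> B}) bs"
  have pd: "path_decomp G bs'"
    unfolding path_decomp_def
  proof (intro conjI allI ballI impI)
    show "bs' \<noteq> []" using pd_ne[OF bs(1)] by (simp add: bs'_def)
  next
    fix B assume "B \<in> set bs'" thus "B \<subseteq> verts G" by (auto simp: bs'_def)
  next
    fix v assume v: "v \<in> verts G"
    then have "f v \<in> verts H" using fv by auto
    then obtain B where "B\<in>set bs" "f v \<in> B" using pd_cov[OF bs(1)] by blast
    thus "\<exists>B\<in>set bs'. v \<in> B" using v by (auto simp: bs'_def)
  next
    fix e assume e: "e \<in> edges G"
    then obtain e' where e': "e'\<in>edges H" "f`e \<subseteq> e'" using fe by blast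
    then obtain B where B: "B\<in>set bs" "e' \<subseteq> B" using pd_edge[OF bs(1)] by blast
    show "\<exists>B\<in>set bs'. e \<subseteq> B"
      apply (rule bexI[of _ "{x\<in>verts G. f x \<in> B}"])
      using e G e' B by (auto simp: bs'_def)
  next
    fix v i j k assume a: "i \<le> j \<and> j \<le> k \<and> k < length bs' \<and> v \<in> bs'!i \<and> v \<in> bs'!k"
    then have "i < length bs" "j < length bs" "k < length bs" by (auto simp: bs'_def)
    with a have "v \<in> verts G" "f v \<in> bs!i" "f v \<in> bs!k" by (auto simp: bs'_def)
    with a pd_int[OF bs(1)] have "f v \<in> bs!j" by (auto simp: bs'_def)
    with \<open>v \<in> verts G\<close> \<open>j < length bs\<close> show "v \<in> bs'!j" by (simp add: bs'_def)
  qed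
  have fin: "finite B" if "B \<in> set bs" for B
    using that pd_sub[OF bs(1)] H unfolding okg_def by (meson finite_subset)
  have ne: "bs \<noteq> []" using pd_ne[OF bs(1)] .
  have "decomp_width bs' \<le> decomp_width bs"
    unfolding decomp_width_def
  proof (rule Max.boundedI)
    show "finite ((\<lambda>B. card B - 1) ` set bs')" by simp
    show "(\<lambda>B. card B - 1) ` set bs' \<noteq> {}" using ne by (simp add: bs'_def)
    fix a assume "a \<in> (\<lambda>B. card B - 1) ` set bs'"
    then obtain B where B: "B\<in>set bs" "a = card {x\<in>verts G. f x\<in>B} - 1" by (auto simp: bs'_def)
    have "card {x\<in>verts G. f x\<in>B} \<le> card B"
      by (rule card_inj_on_le[of f]) (use inj fin[OF B(1)] in \<open>auto intro: inj_on_subset\<close>)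
    then have "a \<le> card B - 1" using B by simp
    also have "\<dots> \<le> Max ((\<lambda>B. card B - 1) ` set bs)" by (rule Max_ge) (use B in auto)
    finally show "a \<le> Max ((\<lambda>B. card B - 1) ` set bs)" .
  qed
  then show ?thesis using pw_le[OF pd] bs(2) by simp
qed

lemma adj_sym: "adj G x y = adj G y x" by (simp add: adj_def insert_commute)

lemma rtc_sym: "(adj G)\<^sup>*\<^sup>* x y \<Longrightarrow> (adj G)\<^sup>*\<^sup>* y x"
  by (induct rule: rtranclp.induct) (auto, metis adj_sym converse_rtranclp_into_rtranclp)

lemma comp_eq: assumes "z \<in> component G v" "z \<in> component G w"
  shows "component G v = component G w"
proof -
  have "(adj G)\<^sup>*\<^sup>* v w" "(adj G)\<^sup>*\<^sup>* w v" using assms unfolding component_def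
    by (auto intro: rtranclp_trans rtc_sym)
  then show ?thesis unfolding component_def by (auto intro: rtranclp_trans)
qed

lemma comp_self: "v \<in> verts G \<Longrightarrow> v \<in> component G v"
  unfolding component_def by auto

lemma comp_sub: "component G v \<subseteq> verts G"
  unfolding component_def by auto

lemma comp_edge: "okg G \<Longrightarrow> {u,w} \<in> edges G \<Longrightarrow> u \<in> component G v \<Longrightarrow> w \<in> component G v"
  unfolding component_def okg_def adj_def
  by (auto intro: rtranclp.rtrancl_into_rtrancl)



lemma card2_neq: "card {a, b} = 2 \<Longrightarrow> a \<noteq> b"
  by auto

lemma cart_sub_strong:
  assumes "wf_graph G1" "wf_graph G2"
  shows "edges (cartesian_prod G1 G2) \<subseteq> edges (strong_prod G1 G2)"
proof
  fix e assume "e \<in> edges (cartesian_prod G1 G2)"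
  then obtain a b u v where e: "e = {(a, v), (b, u)}" "a \<in> verts G1" "b \<in> verts G1"
    "u \<in> verts G2" "v \<in> verts G2"
    "({a, b} \<in> edges G1 \<and> u = v) \<or> ({u, v} \<in> edges G2 \<and> a = b)"
    unfolding cartesian_prod_def by auto
  have "(a, v) \<noteq> (b, u)" using e(6) assms card2_neq unfolding wf_graph_def by fastforce
  then show "e \<in> edges (strong_prod G1 G2)" unfolding strong_prod_def
    apply (simp only: graph.select_convs mem_Collect_eq)
    apply (rule exI[of _ a], rule exI[of _ b], rule exI[of _ u], rule exI[of _ v])
    using e by auto
qed

lemma strong_bound:
  assumes w1: "wf_graph G1" and w2: "wf_graph G2" and k: "pathwidth G1 \<le> k"
  and c: "\<forall>v\<in>verts G2. card (component G2 v) \<le> c"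
  shows "pathwidth (strong_prod G1 G2) \<le> (k+1)*c"
proof -
  obtain bs where bs: "path_decomp G1 bs" "decomp_width bs = pathwidth G1"
    using pw_attained wf_okg w1 by blast
  have ok2: "okg G2" using wf_okg w2 .
  have fin2: "finite (verts G2)" using w2 wf_graph_def by blast
  obtain Ks0 where K0: "set Ks0 = component G2 ` verts G2" "distinct Ks0"
    using finite_distinct_list[of "component G2 ` verts G2"] fin2 by auto
  define Ks where "Ks = {} # Ks0"
  have "{} \<notin> set Ks0" using K0(1) comp_self by fastforce
  then have Kdist: "distinct Ks" using K0(2) by (simp add: Ks_def)
  have Kset: "set Ks = insert {} (component G2 ` verts G2)" using K0(1) by (simp add: Ks_def)
  have Kdisj: "Ks!p \<inter> Ks!q = {}" if "p < length Ks" "q < length Ks" "p \<noteq> q" for p q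
  proof (rule ccontr)
    assume "Ks!p \<inter> Ks!q \<noteq> {}"
    then obtain z where z: "z \<in> Ks!p" "z \<in> Ks!q" by blast
    have ne: "Ks!p \<noteq> Ks!q" using Kdist that nth_eq_iff_index_eq by blast
    have "Ks!p \<in> set Ks" "Ks!q \<in> set Ks" using that by auto
    then obtain v w where "Ks!p = component G2 v" "Ks!q = component G2 w"
      using z Kset by auto
    then show False using comp_eq z ne by metis
  qed
  have Ksub: "Ks!p \<subseteq> verts G2" if "p < length Ks" for p
    using nth_mem[OF that] Kset comp_sub[of G2] by blast
  have Kcard: "card (Ks!p) \<le> c" if "p < length Ks" for p
    using nth_mem[OF that] Kset c by auto
  have Kcov: "\<exists>p<length Ks. Ks!p = component G2 v" if "v \<in> verts G2" for v
  proof -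
    have "component G2 v \<in> set Ks" using that Kset by auto
    then show ?thesis by (simp add: in_set_conv_nth)
  qed
  define m where "m = length bs"
  define r where "r = length Ks"
  have m: "m > 0" using pd_ne[OF bs(1)] by (simp add: m_def)
  have r: "r > 0" by (simp add: r_def Ks_def)
  define bs' where "bs' = map (\<lambda>t. bs!(t mod m) \<times> Ks!(t div m)) [0..<m*r]"
  have len: "length bs' = m*r" by (simp add: bs'_def)
  have nth: "bs'!t = bs!(t mod m) \<times> Ks!(t div m)" if "t < m*r" for t
    using that by (simp add: bs'_def)
  have tmod: "t mod m < m" for t using m by simp
  have tdiv: "t div m < r" if "t < m*r" for t
    using that by (simp add: less_mult_imp_div_less mult.commute)
  have bcov: "\<exists>j<m. a \<in> bs!j" if "a \<in> verts G1" for a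
    using pd_cov[OF bs(1) that] by (auto simp: m_def in_set_conv_nth)
  have idx: "p*m + j < m*r \<and> (p*m+j) mod m = j \<and> (p*m+j) div m = p" if "p < r" "j < m" for p j
  proof -
    have "p*m + j < (p+1)*m" using that by simp
    also have "\<dots> \<le> r*m" using that by (intro mult_le_mono1) simp
    finally show ?thesis using that by (simp add: mult.commute)
  qed
  have pd: "path_decomp (strong_prod G1 G2) bs'"
    unfolding path_decomp_def
  proof (intro conjI allI ballI impI)
    show "bs' \<noteq> []" using m r by (simp add: bs'_def)
  next
    fix B assume "B \<in> set bs'"
    then obtain t where t: "t < m*r" "B = bs!(t mod m) \<times> Ks!(t div m)"
      by (auto simp: bs'_def)
    have "bs!(t mod m) \<subseteq> verts G1" using pd_sub[OF bs(1)] tmod[of t] by (simp add: m_def)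
    moreover have "Ks!(t div m) \<subseteq> verts G2" using Ksub tdiv[OF t(1)] by (simp add: r_def)
    ultimately show "B \<subseteq> verts (strong_prod G1 G2)" using t by (auto simp: strong_prod_def)
  next
    fix x assume "x \<in> verts (strong_prod G1 G2)"
    then obtain a v where x: "x = (a, v)" "a \<in> verts G1" "v \<in> verts G2"
      by (auto simp: strong_prod_def)
    obtain j where j: "j < m" "a \<in> bs!j" using bcov[OF x(2)] by blast
    obtain p where p: "p < r" "Ks!p = component G2 v" using Kcov[OF x(3)] by (auto simp: r_def)
    have "bs'!(p*m+j) = bs!j \<times> component G2 v" using idx[OF p(1) j(1)] nth[of "p*m+j"] p(2) by simp
    moreover have "v \<in> component G2 v" using comp_self[OF x(3)] by simp
    ultimately have "x \<in> bs'!(p*m+j)" using x(1) j by simp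
    then show "\<exists>B\<in>set bs'. x \<in> B" using idx[OF p(1) j(1)] len by (metis nth_mem)
  next
    fix e assume "e \<in> edges (strong_prod G1 G2)"
    then obtain a b u v where e: "e = {(a, v), (b, u)}" "a \<in> verts G1" "b \<in> verts G1"
      "u \<in> verts G2" "v \<in> verts G2" "a = b \<or> {a, b} \<in> edges G1" "u = v \<or> {u, v} \<in> edges G2"
      unfolding strong_prod_def by auto
    have "\<exists>j<m. a \<in> bs!j \<and> b \<in> bs!j"
    proof (cases "a = b")
      case True then show ?thesis using bcov[OF e(2)] by auto
    next
      case False
      then have "{a,b} \<in> edges G1" using e(6) by auto
      then obtain B where "B \<in> set bs" "{a,b} \<subseteq> B" using pd_edge[OF bs(1)] by blast
      then show ?thesis by (auto simp: m_def in_set_conv_nth)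
    qed
    then obtain j where j: "j < m" "a \<in> bs!j" "b \<in> bs!j" by blast
    obtain p where p: "p < r" "Ks!p = component G2 v" using Kcov[OF e(5)] by (auto simp: r_def)
    have "u \<in> component G2 v"
    proof (cases "u = v")
      case True then show ?thesis using comp_self[OF e(5)] by simp
    next
      case False
      then have "{v, u} \<in> edges G2" using e(7) by (simp add: insert_commute)
      then show ?thesis using comp_edge[OF ok2 _ comp_self[OF e(5)]] by blast
    qed
    moreover have "bs'!(p*m+j) = bs!j \<times> component G2 v" using idx[OF p(1) j(1)] nth[of "p*m+j"] p(2) by simp
    moreover have "v \<in> component G2 v" using comp_self[OF e(5)] by simp
    ultimately have "e \<subseteq> bs'!(p*m+j)" using e(1) j by simp
    then show "\<exists>B\<in>set bs'. e \<subseteq> B" using idx[OF p(1) j(1)] len by (metis nth_mem)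
  next
    fix x i j k assume a: "i \<le> j \<and> j \<le> k \<and> k < length bs' \<and> x \<in> bs'!i \<and> x \<in> bs'!k"
    obtain a y where x: "x = (a, y)" by force
    have ik: "i < m*r" "j < m*r" "k < m*r" using a len by auto
    have ai: "a \<in> bs!(i mod m)" "y \<in> Ks!(i div m)" using a nth[OF ik(1)] x by auto
    have ak: "a \<in> bs!(k mod m)" "y \<in> Ks!(k div m)" using a nth[OF ik(3)] x by auto
    have q: "i div m = k div m" using Kdisj[of "i div m" "k div m"] ai(2) ak(2) tdiv[OF ik(1)] tdiv[OF ik(3)]
      by (auto simp: r_def)
    have "i div m \<le> j div m" "j div m \<le> k div m" using a by (auto intro: div_le_mono)
    then have qj: "j div m = i div m" using q by simp
    have i_eq: "i = (i div m)*m + i mod m" "j = (i div m)*m + j mod m" "k = (i div m)*m + k mod m"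
      using qj q by (simp_all, metis div_mult_mod_eq, metis div_mult_mod_eq)
    have "i mod m \<le> j mod m" using i_eq q qj a by linarith
    have "j mod m \<le> k mod m" using i_eq q qj a by linarith
    with \<open>i mod m \<le> j mod m\<close> have "a \<in> bs!(j mod m)" using pd_int[OF bs(1) _ _ _ ai(1) ak(1)] tmod[of k] by (simp add: m_def)
    then show "x \<in> bs'!j" using nth[OF ik(2)] x ai(2) qj by simp
  qed
  have "decomp_width bs' \<le> (k+1)*c"
    unfolding decomp_width_def
  proof (rule Max.boundedI)
    show "finite ((\<lambda>B. card B - 1) ` set bs')" by simp
    show "(\<lambda>B. card B - 1) ` set bs' \<noteq> {}" using m r by (simp add: bs'_def)
    fix z assume "z \<in> (\<lambda>B. card B - 1) ` set bs'"
    then obtain t where t: "t < m*r" "z = card (bs!(t mod m) \<times> Ks!(t div m)) - 1"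
      by (auto simp: bs'_def)
    have "card (bs!(t mod m)) - 1 \<le> decomp_width bs"
      unfolding decomp_width_def by (rule Max_ge) (use tmod[of t] in \<open>auto simp: m_def\<close>)
    then have c1: "card (bs!(t mod m)) \<le> k+1" using bs(2) k by simp
    have c2: "card (Ks!(t div m)) \<le> c" using Kcard tdiv[OF t(1)] by (simp add: r_def)
    have "z \<le> card (bs!(t mod m)) * card (Ks!(t div m))" using t(2) by (simp add: card_cartesian_product)
    also have "\<dots> \<le> (k+1)*c" using c1 c2 by (rule mult_le_mono)
    finally show "z \<le> (k+1)*c" .
  qed
  then show ?thesis using pw_le[OF pd] by simp
qed



definition Xs :: "'a set list \<Rightarrow> nat \<Rightarrow> 'a set" where
  "Xs bs i = \<Union>{bs!j |j. j \<le> i \<and> j < length bs}"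

definition conn :: "'a graph \<Rightarrow> 'a set \<Rightarrow> bool" where
  "conn H S \<longleftrightarrow> (\<exists>c. \<forall>z\<in>S. (\<lambda>a b. a\<in>S \<and> b\<in>S \<and> {a,b}\<in>edges H)\<^sup>*\<^sup>* c z)"

lemma sep_step:
  assumes pd: "path_decomp H bs" and i: "i < length bs" and e: "{a,b} \<in> edges H"
    and na: "a \<notin> bs!i" and nb: "b \<notin> bs!i"
  shows "a \<in> Xs bs i \<longleftrightarrow> b \<in> Xs bs i"
proof -
  obtain B where B: "B \<in> set bs" "{a,b} \<subseteq> B" using pd_edge[OF pd e] by blast
  then obtain j where j: "j < length bs" "bs!j = B" by (auto simp: in_set_conv_nth)
  show ?thesis
  proof (cases "j \<le> i")
    case True
    then have "a \<in> Xs bs i" "b \<in> Xs bs i" using j B unfolding Xs_def by auto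
    then show ?thesis by simp
  next
    case False
    have notX: "x \<notin> Xs bs i" if "x \<in> bs!j" "x \<notin> bs!i" for x
    proof
      assume "x \<in> Xs bs i"
      then obtain j' where j': "j' \<le> i" "x \<in> bs!j'" unfolding Xs_def by auto
      have "x \<in> bs!i" using pd_int[OF pd j'(1) _ j(1) j'(2) that(1)] False by simp
      then show False using that by simp
    qed
    then show ?thesis using na nb B j by auto
  qed
qed

lemma sep_path:
  assumes pd: "path_decomp H bs" and i: "i < length bs" and R: "R\<^sup>*\<^sup>* u w"
    and Rs: "\<And>a b. R a b \<Longrightarrow> {a,b}\<in>edges H \<and> a \<notin> bs!i \<and> b \<notin> bs!i"
  shows "u \<in> Xs bs i \<longleftrightarrow> w \<in> Xs bs i"
  using R
proof (induct rule: rtranclp_induct)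
  case base then show ?case by simp
next
  case (step y z)
  then show ?case using sep_step[OF pd i] Rs[OF step(2)] by blast
qed

lemma sep_conn:
  assumes pd: "path_decomp H bs" and i: "i < length bs" and c: "conn H S"
    and d: "S \<inter> bs!i = {}" and z0: "z0 \<in> S" "z0 \<in> Xs bs i"
  shows "S \<subseteq> Xs bs i"
proof -
  let ?R = "\<lambda>a b. a\<in>S \<and> b\<in>S \<and> {a,b}\<in>edges H"
  obtain c where c: "\<forall>z\<in>S. ?R\<^sup>*\<^sup>* c z" using c unfolding conn_def by blast
  have Rs: "\<And>a b. ?R a b \<Longrightarrow> {a,b}\<in>edges H \<and> a \<notin> bs!i \<and> b \<notin> bs!i" using d by auto
  have "?R\<^sup>*\<^sup>* c z0" using c z0(1) by blast
  then have "c \<in> Xs bs i" using sep_path[OF pd i _ Rs] z0(2) by blast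
  show ?thesis
  proof
    fix z assume "z \<in> S"
    then have "?R\<^sup>*\<^sup>* c z" using c by blast
    then show "z \<in> Xs bs i" using sep_path[OF pd i _ Rs] \<open>c \<in> Xs bs i\<close> by blast
  qed
qed

lemma X_minus: assumes "0 < i" shows "Xs bs i - bs!i \<subseteq> Xs bs (i-1)"
proof
  fix x assume "x \<in> Xs bs i - bs!i"
  then obtain j where j: "j \<le> i" "j < length bs" "x \<in> bs!j" "x \<notin> bs!i" unfolding Xs_def by blast
  then have "j \<noteq> i" by auto
  then have "j \<le> i - 1" using j(1) by simp
  then show "x \<in> Xs bs (i-1)" using j unfolding Xs_def by blast
qed

lemma X_0: "Xs bs 0 \<subseteq> bs!0"
  unfolding Xs_def by auto

lemma X_all: "path_decomp H bs \<Longrightarrow> verts H \<subseteq> Xs bs (length bs - 1)"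
proof
  fix x assume pd: "path_decomp H bs" and x: "x \<in> verts H"
  obtain B where "B \<in> set bs" "x \<in> B" using pd_cov[OF pd x] by blast
  then obtain j where "j < length bs" "bs!j = B" by (auto simp: in_set_conv_nth)
  then have "j \<le> length bs - 1" "j < length bs" "x \<in> bs!j" using \<open>x \<in> B\<close> by auto
  then show "x \<in> Xs bs (length bs - 1)" unfolding Xs_def by blast
qed

lemma conn_col:
  assumes o1: "okg G1" and v1: "v1 \<in> verts G1" and y: "y \<in> verts G2"
  shows "conn (cartesian_prod G1 G2) (component G1 v1 \<times> {y})"
proof -
  let ?S = "component G1 v1 \<times> {y}"
  let ?R = "\<lambda>a b. a\<in>?S \<and> b\<in>?S \<and> {a,b}\<in>edges (cartesian_prod G1 G2)"
  have "?R\<^sup>*\<^sup>* (v1,y) (x,y)" if "(adj G1)\<^sup>*\<^sup>* v1 x" for x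
    using that
  proof (induct rule: rtranclp_induct)
    case base then show ?case by simp
  next
    case (step x x')
    have e: "{x,x'} \<in> edges G1" using step(2) by (simp add: adj_def)
    then have xv: "x \<in> verts G1" "x' \<in> verts G1" using o1 unfolding okg_def by auto
    have "x \<in> component G1 v1" "x' \<in> component G1 v1"
      using xv step(1,2) unfolding component_def by auto
    moreover have "{(x,y),(x',y)} \<in> edges (cartesian_prod G1 G2)"
      unfolding cartesian_prod_def
      apply (simp only: graph.select_convs mem_Collect_eq)
      apply (rule exI[of _ x], rule exI[of _ x'], rule exI[of _ y], rule exI[of _ y])
      using xv y e by auto
    ultimately have "?R (x,y) (x',y)" by simp
    then show ?case by (rule rtranclp.rtrancl_into_rtrancl[OF step(3)])
  qed
  then show ?thesis unfolding conn_def component_def by blast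
qed

lemma conn_row:
  assumes o2: "okg G2" and v2: "v2 \<in> verts G2" and x: "x \<in> verts G1"
  shows "conn (cartesian_prod G1 G2) ({x} \<times> component G2 v2)"
proof -
  let ?S = "{x} \<times> component G2 v2"
  let ?R = "\<lambda>a b. a\<in>?S \<and> b\<in>?S \<and> {a,b}\<in>edges (cartesian_prod G1 G2)"
  have "?R\<^sup>*\<^sup>* (x,v2) (x,y)" if "(adj G2)\<^sup>*\<^sup>* v2 y" for y
    using that
  proof (induct rule: rtranclp_induct)
    case base then show ?case by simp
  next
    case (step y y')
    have e: "{y,y'} \<in> edges G2" using step(2) by (simp add: adj_def)
    then have yv: "y \<in> verts G2" "y' \<in> verts G2" using o2 unfolding okg_def by auto
    have "y \<in> component G2 v2" "y' \<in> component G2 v2"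
      using yv step(1,2) unfolding component_def by auto
    moreover have "{(x,y),(x,y')} \<in> edges (cartesian_prod G1 G2)"
      unfolding cartesian_prod_def
      apply (simp only: graph.select_convs mem_Collect_eq)
      apply (rule exI[of _ x], rule exI[of _ x], rule exI[of _ y'], rule exI[of _ y])
      using yv x e by (auto simp: insert_commute)
    ultimately have "?R (x,y) (x,y')" by simp
    then show ?case by (rule rtranclp.rtrancl_into_rtrancl[OF step(3)])
  qed
  then show ?thesis unfolding conn_def component_def by blast
qed

lemma cross:
  assumes w1: "wf_graph G1" and w2: "wf_graph G2" and v1: "v1 \<in> verts G1" and v2: "v2 \<in> verts G2"
  shows "min (card (component G1 v1)) (card (component G2 v2)) \<le> pathwidth (cartesian_prod G1 G2) + 1"
proof -
  let ?H = "cartesian_prod G1 G2"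
  define S1 where "S1 = component G1 v1"
  define S2 where "S2 = component G2 v2"
  have o1: "okg G1" and o2: "okg G2" using w1 w2 wf_okg by auto
  have oH: "okg ?H" using okg_cart[OF o1 o2] .
  obtain bs where bs: "path_decomp ?H bs" "decomp_width bs = pathwidth ?H"
    using pw_attained[OF oH] by blast
  define n where "n = length bs"
  have n: "n > 0" using pd_ne[OF bs(1)] by (simp add: n_def)
  have S1v: "S1 \<subseteq> verts G1" and S2v: "S2 \<subseteq> verts G2" unfolding S1_def S2_def by (rule comp_sub)+
  have v1S: "v1 \<in> S1" using comp_self[OF v1] by (simp add: S1_def)
  define P where "P i \<longleftrightarrow> (\<exists>x\<in>S1. {x}\<times>S2 \<subseteq> Xs bs i) \<or> (\<exists>y\<in>S2. S1\<times>{y} \<subseteq> Xs bs i)" for i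
  have "{v1}\<times>S2 \<subseteq> verts ?H" using v1 S2v by (auto simp: cartesian_prod_def)
  then have "P (n-1)" using X_all[OF bs(1)] v1S unfolding P_def n_def by blast
  define i where "i = (LEAST i. P i)"
  have Pi: "P i" unfolding i_def by (rule LeastI) fact
  have "i \<le> n - 1" unfolding i_def by (rule Least_le) fact
  then have iln: "i < n" using n by simp
  then have il: "i < length bs" by (simp add: n_def)
  have notP: "\<not> P j" if "j < i" for j using not_less_Least[OF that[unfolded i_def]] by (simp add: i_def)
  have fB: "finite (bs!i)" using pd_sub[OF bs(1) nth_mem[OF il]] oH unfolding okg_def
    by (meson finite_subset)
  have mainc: "\<not> (T \<subseteq> Xs bs i \<and> T \<inter> bs!i = {})" if T0: "T \<noteq> {}" and PT: "P' T"
    and PP: "\<And>j. P' T \<Longrightarrow> T \<subseteq> Xs bs j \<Longrightarrow> P j" for T P'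
  proof
    assume a: "T \<subseteq> Xs bs i \<and> T \<inter> bs!i = {}"
    show False
    proof (cases "i = 0")
      case True
      then show False using a X_0[of bs] T0 by blast
    next
      case False
      then have "T \<subseteq> Xs bs (i-1)" using a X_minus[of i bs] by auto
      then have "P (i-1)" using PP PT by blast
      then show False using notP False by simp
    qed
  qed
  have "min (card S1) (card S2) \<le> card (bs!i)"
  proof (cases "\<exists>x\<in>S1. {x}\<times>S2 \<subseteq> Xs bs i")
    case True
    then obtain x where x: "x \<in> S1" "{x}\<times>S2 \<subseteq> Xs bs i" by blast
    have "S2 \<subseteq> snd ` bs!i"
    proof
      fix y assume y: "y \<in> S2"
      have "S1\<times>{y} \<inter> bs!i \<noteq> {}"
      proof
        assume d: "S1\<times>{y} \<inter> bs!i = {}"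
        have c: "conn ?H (S1\<times>{y})" using conn_col[OF o1 v1, of y G2] y S2v unfolding S1_def by auto
        have "(x,y) \<in> S1\<times>{y}" "(x,y) \<in> Xs bs i" using x y by auto
        then have "S1\<times>{y} \<subseteq> Xs bs i" using sep_conn[OF bs(1) il c d] by blast
        moreover have "P j" if "S1\<times>{y} \<subseteq> Xs bs j" for j using that y unfolding P_def by blast
        ultimately show False using mainc[of "S1\<times>{y}" "\<lambda>_. True"] d v1S by blast
      qed
      then obtain z where "z \<in> bs!i" "z \<in> S1\<times>{y}" by blast
      then show "y \<in> snd ` bs!i" by force
    qed
    then have "card S2 \<le> card (snd ` bs!i)" using fB by (intro card_mono) auto
    also have "\<dots> \<le> card (bs!i)" by (rule card_image_le[OF fB])
    finally show ?thesis by simp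
  next
    case False
    then obtain y where y: "y \<in> S2" "S1\<times>{y} \<subseteq> Xs bs i" using Pi unfolding P_def by blast
    have "S1 \<subseteq> fst ` bs!i"
    proof
      fix x assume x: "x \<in> S1"
      have "{x}\<times>S2 \<inter> bs!i \<noteq> {}"
      proof
        assume d: "{x}\<times>S2 \<inter> bs!i = {}"
        have c: "conn ?H ({x}\<times>S2)" using conn_row[OF o2 v2, of x G1] x S1v unfolding S2_def by auto
        have "(x,y) \<in> {x}\<times>S2" "(x,y) \<in> Xs bs i" using x y by auto
        then have "{x}\<times>S2 \<subseteq> Xs bs i" using sep_conn[OF bs(1) il c d] by blast
        moreover have "P j" if "{x}\<times>S2 \<subseteq> Xs bs j" for j using that x unfolding P_def by blast
        moreover have "v2 \<in> S2" using comp_self[OF v2] by (simp add: S2_def)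
        ultimately show False using mainc[of "{x}\<times>S2" "\<lambda>_. True"] d by blast
      qed
      then obtain z where "z \<in> bs!i" "z \<in> {x}\<times>S2" by blast
      then show "x \<in> fst ` bs!i" by force
    qed
    then have "card S1 \<le> card (fst ` bs!i)" using fB by (intro card_mono) auto
    also have "\<dots> \<le> card (bs!i)" by (rule card_image_le[OF fB])
    finally show ?thesis by simp
  qed
  moreover have "card (bs!i) - 1 \<le> decomp_width bs"
    unfolding decomp_width_def by (rule Max_ge) (use il in auto)
  ultimately show ?thesis using bs(2) unfolding S1_def S2_def by linarith
qed

lemma mono_wf: "monotone_class C \<Longrightarrow> G \<in> C \<Longrightarrow> wf_graph G"
  unfolding monotone_class_def graph_class_def by blast

lemma cp_mem: "G1 \<in> C1 \<Longrightarrow> G2 \<in> C2 \<Longrightarrow> p G1 G2 \<in> class_prod p C1 C2"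
  unfolding class_prod_def by blast

lemma cp_elim: "G \<in> class_prod p C1 C2 \<Longrightarrow> \<exists>G1 G2. G = p G1 G2 \<and> G1 \<in> C1 \<and> G2 \<in> C2"
  unfolding class_prod_def by blast

lemma K1: assumes "monotone_class C" shows "\<exists>v. \<lparr>verts={v}, edges={}\<rparr> \<in> C"
proof -
  obtain G where G: "G \<in> C" "verts G \<noteq> {}" using assms unfolding monotone_class_def graph_class_def by blast
  then obtain v where v: "v \<in> verts G" by blast
  have "subgraph \<lparr>verts={v}, edges={}\<rparr> G" using v unfolding subgraph_def wf_graph_def by simp
  then show ?thesis using G(1) assms unfolding monotone_class_def by blast
qed

lemma max_ge: "finite (verts G) \<Longrightarrow> v \<in> verts G \<Longrightarrow> card (component G v) \<le> max_comp_size G"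
  unfolding max_comp_size_def by (rule Max_ge) auto

lemma max_gt: assumes "max_comp_size G > k" "finite (verts G)"
  shows "\<exists>v\<in>verts G. card (component G v) > k"
proof -
  have "max_comp_size G \<in> insert 0 ((\<lambda>v. card (component G v)) ` verts G)"
    unfolding max_comp_size_def by (rule Max_in) (use assms(2) in auto)
  then show ?thesis using assms(1) by auto
qed

lemma stepA:
  assumes m1: "monotone_class C1" and m2: "monotone_class C2"
    and b: "bounded_pathwidth (class_prod strong_prod C1 C2)"
  shows "bounded_pathwidth (class_prod cartesian_prod C1 C2)"
proof -
  obtain k where k: "\<forall>G\<in>class_prod strong_prod C1 C2. pathwidth G \<le> k"
    using b unfolding bounded_pathwidth_def by blast
  have "pathwidth G \<le> k" if hG: "G \<in> class_prod cartesian_prod C1 C2" for G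
  proof -
    obtain G1 G2 where G: "G = cartesian_prod G1 G2" "G1 \<in> C1" "G2 \<in> C2" using cp_elim[OF hG] by blast
    have w: "wf_graph G1" "wf_graph G2" using G mono_wf m1 m2 by auto
    have o: "okg G1" "okg G2" using w wf_okg by auto
    have "pathwidth (cartesian_prod G1 G2) \<le> pathwidth (strong_prod G1 G2)"
    proof (rule pw_embed[where f=id])
      show "\<forall>e\<in>edges (cartesian_prod G1 G2). e \<subseteq> verts (cartesian_prod G1 G2)"
        using okg_cart[OF o] unfolding okg_def by blast
      show "okg (strong_prod G1 G2)" using okg_strong[OF o] .
      show "inj_on id (verts (cartesian_prod G1 G2))" by simp
      show "id ` verts (cartesian_prod G1 G2) \<subseteq> verts (strong_prod G1 G2)"
        by (simp add: cartesian_prod_def strong_prod_def)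
      show "\<forall>e\<in>edges (cartesian_prod G1 G2). \<exists>e'\<in>edges (strong_prod G1 G2). id ` e \<subseteq> e'"
        using cart_sub_strong[OF w] by auto
    qed
    also have "\<dots> \<le> k" using k cp_mem[OF G(2,3)] by blast
    finally show ?thesis using G(1) by simp
  qed
  then show ?thesis unfolding bounded_pathwidth_def by blast
qed

lemma stepB1:
  assumes m1: "monotone_class C1" and m2: "monotone_class C2"
    and b: "bounded_pathwidth (class_prod cartesian_prod C1 C2)"
  shows "bounded_pathwidth C1"
proof -
  obtain k where k: "\<forall>G\<in>class_prod cartesian_prod C1 C2. pathwidth G \<le> k"
    using b unfolding bounded_pathwidth_def by blast
  obtain v where v: "\<lparr>verts={v}, edges={}\<rparr> \<in> C2" using K1[OF m2] by blast
  let ?K = "\<lparr>verts={v}, edges={}\<rparr> :: nat graph"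
  have "pathwidth G1 \<le> k" if G1: "G1 \<in> C1" for G1
  proof -
    have w: "wf_graph G1" "wf_graph ?K" using G1 v mono_wf m1 m2 by auto
    have o: "okg G1" "okg ?K" using w wf_okg by auto
    have "pathwidth G1 \<le> pathwidth (cartesian_prod G1 ?K)"
    proof (rule pw_embed[where f="\<lambda>x. (x, v)"])
      show "\<forall>e\<in>edges G1. e \<subseteq> verts G1" using o(1) unfolding okg_def by blast
      show "okg (cartesian_prod G1 ?K)" using okg_cart[OF o] .
      show "inj_on (\<lambda>x. (x, v)) (verts G1)" by (simp add: inj_on_def)
      show "(\<lambda>x. (x, v)) ` verts G1 \<subseteq> verts (cartesian_prod G1 ?K)"
        by (auto simp add: cartesian_prod_def)
      show "\<forall>e\<in>edges G1. \<exists>e'\<in>edges (cartesian_prod G1 ?K). (\<lambda>x. (x, v)) ` e \<subseteq> e'"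
      proof
        fix e assume e: "e \<in> edges G1"
        then obtain a b where ab: "e = {a,b}" using w(1) unfolding wf_graph_def by (metis card_2_iff)
        have abv: "a \<in> verts G1" "b \<in> verts G1" using e ab w(1) unfolding wf_graph_def by auto
        have "{(a,v),(b,v)} \<in> edges (cartesian_prod G1 ?K)"
          unfolding cartesian_prod_def
          apply (simp only: graph.select_convs mem_Collect_eq)
          apply (rule exI[of _ a], rule exI[of _ b], rule exI[of _ v], rule exI[of _ v])
          using abv e ab by auto
        then show "\<exists>e'\<in>edges (cartesian_prod G1 ?K). (\<lambda>x. (x, v)) ` e \<subseteq> e'"
          using ab by auto
      qed
    qed
    also have "\<dots> \<le> k" using k cp_mem[OF G1 v] by blast
    finally show ?thesis .
  qed
  then show ?thesis unfolding bounded_pathwidth_def by blast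
qed

lemma stepB2:
  assumes m1: "monotone_class C1" and m2: "monotone_class C2"
    and b: "bounded_pathwidth (class_prod cartesian_prod C1 C2)"
  shows "bounded_pathwidth C2"
proof -
  obtain k where k: "\<forall>G\<in>class_prod cartesian_prod C1 C2. pathwidth G \<le> k"
    using b unfolding bounded_pathwidth_def by blast
  obtain v where v: "\<lparr>verts={v}, edges={}\<rparr> \<in> C1" using K1[OF m1] by blast
  let ?K = "\<lparr>verts={v}, edges={}\<rparr> :: nat graph"
  have "pathwidth G2 \<le> k" if G2: "G2 \<in> C2" for G2
  proof -
    have w: "wf_graph G2" "wf_graph ?K" using G2 v mono_wf m1 m2 by auto
    have o: "okg G2" "okg ?K" using w wf_okg by auto
    have "pathwidth G2 \<le> pathwidth (cartesian_prod ?K G2)"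
    proof (rule pw_embed[where f="\<lambda>x. (v, x)"])
      show "\<forall>e\<in>edges G2. e \<subseteq> verts G2" using o(1) unfolding okg_def by blast
      show "okg (cartesian_prod ?K G2)" using okg_cart[OF o(2,1)] .
      show "inj_on (\<lambda>x. (v, x)) (verts G2)" by (simp add: inj_on_def)
      show "(\<lambda>x. (v, x)) ` verts G2 \<subseteq> verts (cartesian_prod ?K G2)"
        by (auto simp add: cartesian_prod_def)
      show "\<forall>e\<in>edges G2. \<exists>e'\<in>edges (cartesian_prod ?K G2). (\<lambda>x. (v, x)) ` e \<subseteq> e'"
      proof
        fix e assume e: "e \<in> edges G2"
        then obtain a b where ab: "e = {a,b}" using w(1) unfolding wf_graph_def by (metis card_2_iff)
        have abv: "a \<in> verts G2" "b \<in> verts G2" using e ab w(1) unfolding wf_graph_def by auto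
        have "{(v,a),(v,b)} \<in> edges (cartesian_prod ?K G2)"
          unfolding cartesian_prod_def
          apply (simp only: graph.select_convs mem_Collect_eq)
          apply (rule exI[of _ v], rule exI[of _ v], rule exI[of _ b], rule exI[of _ a])
          using abv e ab by (auto simp: insert_commute)
        then show "\<exists>e'\<in>edges (cartesian_prod ?K G2). (\<lambda>x. (v, x)) ` e \<subseteq> e'"
          using ab by auto
      qed
    qed
    also have "\<dots> \<le> k" using k cp_mem[OF v G2] by blast
    finally show ?thesis .
  qed
  then show ?thesis unfolding bounded_pathwidth_def by blast
qed

lemma stepC:
  assumes m1: "monotone_class C1" and m2: "monotone_class C2"
    and b: "bounded_pathwidth (class_prod cartesian_prod C1 C2)"
  shows "bounded_comp_size C1 \<or> bounded_comp_size C2"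
proof (rule ccontr)
  assume "\<not> ?thesis"
  then have n1: "\<forall>k. \<exists>G\<in>C1. max_comp_size G > k" and n2: "\<forall>k. \<exists>G\<in>C2. max_comp_size G > k"
    unfolding bounded_comp_size_def by (auto simp: not_le)
  obtain k where k: "\<forall>G\<in>class_prod cartesian_prod C1 C2. pathwidth G \<le> k"
    using b unfolding bounded_pathwidth_def by blast
  obtain G1 where G1: "G1 \<in> C1" "max_comp_size G1 > k+1" using n1 by blast
  obtain G2 where G2: "G2 \<in> C2" "max_comp_size G2 > k+1" using n2 by blast
  have w: "wf_graph G1" "wf_graph G2" using G1 G2 mono_wf m1 m2 by auto
  then have f: "finite (verts G1)" "finite (verts G2)" unfolding wf_graph_def by auto
  obtain v1 where v1: "v1 \<in> verts G1" "card (component G1 v1) > k+1" using max_gt[OF G1(2) f(1)] by blast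
  obtain v2 where v2: "v2 \<in> verts G2" "card (component G2 v2) > k+1" using max_gt[OF G2(2) f(2)] by blast
  have "min (card (component G1 v1)) (card (component G2 v2)) \<le> pathwidth (cartesian_prod G1 G2) + 1"
    by (rule cross[OF w v1(1) v2(1)])
  moreover have "pathwidth (cartesian_prod G1 G2) \<le> k" using k cp_mem[OF G1(1) G2(1)] by blast
  ultimately show False using v1(2) v2(2) by linarith
qed

lemma strong_swap:
  assumes w1: "wf_graph G1" and w2: "wf_graph G2"
  shows "pathwidth (strong_prod G1 G2) \<le> pathwidth (strong_prod G2 G1)"
proof (rule pw_embed[where f="\<lambda>p. (snd p, fst p)"])
  have o: "okg G1" "okg G2" using w1 w2 wf_okg by auto
  show "\<forall>e\<in>edges (strong_prod G1 G2). e \<subseteq> verts (strong_prod G1 G2)"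
    using okg_strong[OF o] unfolding okg_def by blast
  show "okg (strong_prod G2 G1)" using okg_strong[OF o(2,1)] .
  show "inj_on (\<lambda>p. (snd p, fst p)) (verts (strong_prod G1 G2))" by (auto simp: inj_on_def)
  show "(\<lambda>p. (snd p, fst p)) ` verts (strong_prod G1 G2) \<subseteq> verts (strong_prod G2 G1)"
    by (auto simp: strong_prod_def)
  show "\<forall>e\<in>edges (strong_prod G1 G2). \<exists>e'\<in>edges (strong_prod G2 G1). (\<lambda>p. (snd p, fst p)) ` e \<subseteq> e'"
  proof
    fix e assume "e \<in> edges (strong_prod G1 G2)"
    then obtain a b u v where e: "e = {(a, v), (b, u)}" "a \<in> verts G1" "b \<in> verts G1"
      "u \<in> verts G2" "v \<in> verts G2" "(a, v) \<noteq> (b, u)"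
      "a = b \<or> {a, b} \<in> edges G1" "u = v \<or> {u, v} \<in> edges G2"
      unfolding strong_prod_def by auto
    have "{(v,a),(u,b)} \<in> edges (strong_prod G2 G1)"
      unfolding strong_prod_def
      apply (simp only: graph.select_convs mem_Collect_eq)
      apply (rule exI[of _ v], rule exI[of _ u], rule exI[of _ b], rule exI[of _ a])
      using e by (auto simp: insert_commute)
    then show "\<exists>e'\<in>edges (strong_prod G2 G1). (\<lambda>p. (snd p, fst p)) ` e \<subseteq> e'"
      using e(1) by auto
  qed
qed

lemma stepD:
  assumes m1: "monotone_class C1" and m2: "monotone_class C2"
    and b1: "bounded_pathwidth C1" and b2: "bounded_pathwidth C2"
    and c: "bounded_comp_size C1 \<or> bounded_comp_size C2"
  shows "bounded_pathwidth (class_prod strong_prod C1 C2)"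
  using c
proof
  assume "bounded_comp_size C2"
  then obtain c where c: "\<forall>G\<in>C2. max_comp_size G \<le> c" unfolding bounded_comp_size_def by blast
  obtain k where k: "\<forall>G\<in>C1. pathwidth G \<le> k" using b1 unfolding bounded_pathwidth_def by blast
  have "pathwidth G \<le> (k+1)*c" if hG: "G \<in> class_prod strong_prod C1 C2" for G
  proof -
    obtain G1 G2 where G: "G = strong_prod G1 G2" "G1 \<in> C1" "G2 \<in> C2" using cp_elim[OF hG] by blast
    have w: "wf_graph G1" "wf_graph G2" using G mono_wf m1 m2 by auto
    have "\<forall>v\<in>verts G2. card (component G2 v) \<le> c"
      using max_ge[of G2] w(2) c G(3) unfolding wf_graph_def by (meson le_trans)
    then show ?thesis using strong_bound[OF w] k G by simp
  qed
  then show ?thesis unfolding bounded_pathwidth_def by blast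
next
  assume "bounded_comp_size C1"
  then obtain c where c: "\<forall>G\<in>C1. max_comp_size G \<le> c" unfolding bounded_comp_size_def by blast
  obtain k where k: "\<forall>G\<in>C2. pathwidth G \<le> k" using b2 unfolding bounded_pathwidth_def by blast
  have "pathwidth G \<le> (k+1)*c" if hG: "G \<in> class_prod strong_prod C1 C2" for G
  proof -
    obtain G1 G2 where G: "G = strong_prod G1 G2" "G1 \<in> C1" "G2 \<in> C2" using cp_elim[OF hG] by blast
    have w: "wf_graph G1" "wf_graph G2" using G mono_wf m1 m2 by auto
    have "\<forall>v\<in>verts G1. card (component G1 v) \<le> c"
      using max_ge[of G1] w(1) c G(2) unfolding wf_graph_def by (meson le_trans)
    then have "pathwidth (strong_prod G2 G1) \<le> (k+1)*c" using strong_bound[OF w(2,1)] k G by simp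
    then show ?thesis using strong_swap[OF w] G(1) by simp
  qed
  then show ?thesis unfolding bounded_pathwidth_def by blast
qed

theorem mainTheorem14:
  fixes C1 C2 :: "nat graph set"
  assumes "monotone_class C1" and "monotone_class C2"
  shows "(bounded_pathwidth (class_prod strong_prod C1 C2)
            \<longleftrightarrow> bounded_pathwidth (class_prod cartesian_prod C1 C2))
       \<and> (bounded_pathwidth (class_prod cartesian_prod C1 C2)
            \<longleftrightarrow> (bounded_pathwidth C1 \<and> bounded_pathwidth C2 \<and>
                 (bounded_comp_size C1 \<or> bounded_comp_size C2)))"
  using stepA[OF assms] stepB1[OF assms] stepB2[OF assms] stepC[OF assms] stepD[OF assms]
  by blast

end
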